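(* Let $m$ be even, let $C=\{c_1,\dots,c_m\}$ with axis $c_1\lhd\dots\lhd c_m$, and let $v$ be a random vote sampled from the Conitzer distribution $\mathcal{D}_{\mathrm{SP}}^{\mathrm{Con}}$ for this axis. For $j\in[m/2]$ and $i\in[m]$: \[\mathbb{P}[\mathrm{pos}_v(c_j)=i]=\begin{cases}2/(2m) & \text{if } i<j,\\ (j+1)/(2m) & \text{if } i=j,\\ 1/(2m) & \text{if } j<i<m-j+1,\\ (m-j+1)/(2m) & \text{if } i=m-j+1,\\ 0 & \text{if } i>m-j+1.\end{cases}\] Further, for each $j\in[m]$ and each $i\in[m]$, $\mathbb{P}[\mathrm{pos}_v(c_j)=i]=\mathbb{P}[\mathrm{pos}_v(c_{m-j+1})=i]$.
   Context: A vote over $C$ is a total order on $C$; $\mathrm{pos}_v(c)$ is the position of $c$ in $v$ (top position is 1). The Conitzer (random peak) distribution for the axis $c_1\lhd\dots\lhd c_m$ generates a vote as follows: pick a candidate uniformly at random and rank it first; then in each of $m-1$ iterations, the already selected candidates form an interval $\{c_a,\dots,c_b\}$ of the axis, and one chooses uniformly at random among the candidates $c_{a-1}$ and $c_{b+1}$ that exist (if only one exists it is chosen with probability 1) and places it in the highest still-available position. *)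

theory Defs
  imports "HOL-Probability.Probability"
begin

text \<open>Candidates c_1,...,c_m are represented by the naturals 1..m, with axis order 1 < 2 < ... < m.
A vote is a list of all candidates, top position first.\<close>

text \<open>con_ext m a b k: distribution of the remaining (at most k) candidates appended after the
already selected interval {a..b} of the axis.\<close>
fun con_ext :: "nat \<Rightarrow> nat \<Rightarrow> nat \<Rightarrow> nat \<Rightarrow> nat list pmf" where
  "con_ext m a b 0 = return_pmf []"
| "con_ext m a b (Suc k) =
     (if a \<le> 1 \<and> m \<le> b then return_pmf []
      else if a \<le> 1 then map_pmf ((#) (b+1)) (con_ext m a (b+1) k)
      else if m \<le> b then map_pmf ((#) (a-1)) (con_ext m (a-1) b k)
      else bind_pmf (pmf_of_set {a-1, b+1})
             (\<lambda>c. map_pmf ((#) c) (if c = a-1 then con_ext m (a-1) b k else con_ext m a (b+1) k)))"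

definition conitzer :: "nat \<Rightarrow> nat list pmf" where
  "conitzer m = bind_pmf (pmf_of_set {1..m}) (\<lambda>c. map_pmf ((#) c) (con_ext m c c (m-1)))"

definition pos :: "nat list \<Rightarrow> nat \<Rightarrow> nat" where
  "pos v c = Suc (LEAST i. i < length v \<and> v ! i = c)"

end

theory Submission
  imports Defs
begin
lemma L1: "(a::nat) \<le> b \<Longrightarrow> Suc b \<le> m \<Longrightarrow> {1..m} - {a..b} = insert (Suc b) ({1..m} - {a..Suc b})"
  by auto
lemma L2: "2 \<le> (a::nat) \<Longrightarrow> a \<le> b \<Longrightarrow> b \<le> m \<Longrightarrow> {1..m} - {a..b} = insert (a - 1) ({1..m} - {a-1..b})"
  by auto

lemma con_ext_set:
  "1 \<le> a \<Longrightarrow> a \<le> b \<Longrightarrow> b \<le> m \<Longrightarrow> b + 1 + k = m + a \<Longrightarrow> xs \<in> set_pmf (con_ext m a b k)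
   \<Longrightarrow> distinct xs \<and> set xs = {1..m} - {a..b}"
proof (induction k arbitrary: a b xs)
  case 0
  then have "a = 1" "b = m" by auto
  then show ?case using 0 by auto
next
  case (Suc k)
  have nf: "\<not> (a \<le> 1 \<and> m \<le> b)" using Suc.prems by auto
  have R: "distinct xs \<and> set xs = {1..m} - {a..b}"
    if ys: "xs = (b+1) # ys" "ys \<in> set_pmf (con_ext m a (b+1) k)" and bm: "b < m" for ys
  proof -
    have "distinct ys \<and> set ys = {1..m} - {a..b+1}"
      using Suc.IH[OF _ _ _ _ ys(2)] Suc.prems bm by simp
    then show ?thesis using ys L1[of a b m] Suc.prems(2,3) bm by auto
  qed
  have L: "distinct xs \<and> set xs = {1..m} - {a..b}"
    if ys: "xs = (a-1) # ys" "ys \<in> set_pmf (con_ext m (a-1) b k)" and bm: "2 \<le> a" for ys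
  proof -
    have "distinct ys \<and> set ys = {1..m} - {a-1..b}"
      using Suc.IH[OF _ _ _ _ ys(2)] Suc.prems bm by simp
    then show ?thesis using ys L2[of a b m] Suc.prems(2,3) bm by auto
  qed
  show ?case
  proof (cases "a \<le> 1")
    case True
    then show ?thesis using R Suc.prems nf by auto
  next
    case F: False
    show ?thesis
    proof (cases "m \<le> b")
      case True
      then show ?thesis using L Suc.prems nf F by auto
    next
      case False
      then have "xs \<in> (\<lambda>ys. (a-1)#ys) ` set_pmf (con_ext m (a-1) b k) \<or>
                 xs \<in> (\<lambda>ys. (b+1)#ys) ` set_pmf (con_ext m a (b+1) k)"
        using Suc.prems F by (auto split: if_splits)
      then show ?thesis using L R F False by auto
    qed
  qed
qed
lemma con_ext_take:
  "n \<le> k \<Longrightarrow> map_pmf (take n) (con_ext m a b k) = con_ext m a b n"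
proof (induction k arbitrary: a b n)
  case 0
  then show ?case by (simp add: map_pmf_def bind_return_pmf)
next
  case (Suc k)
  show ?case
  proof (cases n)
    case 0
    then show ?thesis by simp
  next
    case (Suc n')
    then have n': "n' \<le> k" using Suc.prems by simp
    have IH: "\<And>a b. map_pmf (take n') (con_ext m a b k) = con_ext m a b n'"
      using Suc.IH[OF n'] .
    show ?thesis unfolding Suc con_ext.simps
      by (simp add: map_pmf_comp map_bind_pmf del: take_Suc cong: if_cong)
         (simp add: IH[symmetric] map_pmf_comp if_distrib[of "map_pmf _"] cong: if_cong)
  qed
qed

definition trn :: "nat \<Rightarrow> nat \<times> nat \<Rightarrow> (nat \<times> nat \<times> nat) pmf" where
  "trn m x = (case x of (a,b) \<Rightarrow>
     if a \<le> 1 then return_pmf (a, b+1, b+1)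
     else if m \<le> b then return_pmf (a-1, b, a-1)
     else map_pmf (\<lambda>c. if c = a-1 then (a-1,b,a-1) else (a,b+1,b+1)) (pmf_of_set {a-1,b+1}))"

fun fwd :: "nat \<Rightarrow> nat \<times> nat \<times> nat \<Rightarrow> nat \<Rightarrow> (nat \<times> nat \<times> nat) pmf" where
  "fwd m x 0 = return_pmf x"
| "fwd m x (Suc k) = bind_pmf (trn m (fst x, fst (snd x))) (\<lambda>y. fwd m y k)"

definition summ :: "nat \<Rightarrow> nat \<Rightarrow> nat \<Rightarrow> nat list \<Rightarrow> nat \<times> nat \<times> nat" where
  "summ a b c xs = (fold min xs a, fold max xs b, last (c # xs))"

lemma summ_cons: "summ a b c (d # xs) = summ (min d a) (max d b) d xs"
  by (simp add: summ_def)

lemma con_fwd: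
  "1 \<le> a \<Longrightarrow> a \<le> b \<Longrightarrow> b + 1 + k \<le> m + a \<Longrightarrow>
   map_pmf (summ a b c) (con_ext m a b k) = fwd m (a,b,c) k"
proof (induction k arbitrary: a b c)
  case 0
  then show ?case by (simp add: summ_def)
next
  case (Suc k)
  have nf: "\<not> (a \<le> 1 \<and> m \<le> b)" using Suc.prems by auto
  show ?case
  proof (cases "a \<le> 1")
    case True
    have "map_pmf (summ a b c) (con_ext m a b (Suc k)) = map_pmf (summ a (b+1) (b+1)) (con_ext m a (b+1) k)"
      using nf True Suc.prems by (simp add: map_pmf_comp summ_cons min.absorb2 max.absorb1)
    also have "\<dots> = fwd m (a,b+1,b+1) k" using Suc.IH Suc.prems by simp
    finally show ?thesis using True by (simp add: trn_def bind_return_pmf)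
  next
    case F: False
    show ?thesis
    proof (cases "m \<le> b")
      case True
      have "map_pmf (summ a b c) (con_ext m a b (Suc k)) = map_pmf (summ (a-1) b (a-1)) (con_ext m (a-1) b k)"
        using nf True F Suc.prems by (simp add: map_pmf_comp summ_cons min.absorb1 max.absorb2)
      also have "\<dots> = fwd m (a-1,b,a-1) k" using Suc.IH Suc.prems F by simp
      finally show ?thesis using True F by (simp add: trn_def bind_return_pmf)
    next
      case False
      have "map_pmf (summ a b c) (con_ext m a b (Suc k)) =
        bind_pmf (pmf_of_set {a-1,b+1}) (\<lambda>d. if d = a-1 then map_pmf (summ (a-1) b (a-1)) (con_ext m (a-1) b k)
             else map_pmf (summ a (b+1) (b+1)) (con_ext m a (b+1) k))"
        using False F Suc.prems
        by (auto simp: map_bind_pmf map_pmf_comp summ_cons max_def min_def intro!: bind_pmf_cong)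
      also have "\<dots> = bind_pmf (pmf_of_set {a-1,b+1}) (\<lambda>d. if d = a-1 then fwd m (a-1,b,a-1) k
             else fwd m (a,b+1,b+1) k)"
      proof -
        have h1: "map_pmf (summ (a-1) b (a-1)) (con_ext m (a-1) b k) = fwd m (a-1,b,a-1) k"
          by (rule Suc.IH) (use Suc.prems F in auto)
        have h2: "map_pmf (summ a (b+1) (b+1)) (con_ext m a (b+1) k) = fwd m (a,b+1,b+1) k"
          by (rule Suc.IH) (use Suc.prems F in auto)
        show ?thesis by (simp only: h1 h2)
      qed
      also have "\<dots> = fwd m (a,b,c) (Suc k)"
        using False F by (simp add: trn_def bind_map_pmf if_distrib[of "\<lambda>y. fwd m y k"] cong: if_cong)
      finally show ?thesis .
    qed
  qed
qed

lemma fwd_Suc': "fwd m x (Suc k) = bind_pmf (fwd m x k) (\<lambda>y. trn m (fst y, fst (snd y)))"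
proof (induction k arbitrary: x)
  case 0
  then show ?case by (simp add: bind_return_pmf bind_return_pmf')
next
  case (Suc k)
  show ?case by (subst fwd.simps, subst Suc.IH) (simp add: bind_assoc_pmf)
qed


definition G :: "nat \<Rightarrow> nat \<Rightarrow> (nat \<times> nat \<times> nat) pmf" where
  "G m n = bind_pmf (pmf_of_set {1..m}) (\<lambda>p. fwd m (p,p,p) n)"

definition ival :: "nat \<times> nat \<times> nat \<Rightarrow> nat \<times> nat" where "ival y = (fst y, fst (snd y))"
definition thd :: "nat \<times> nat \<times> nat \<Rightarrow> nat" where "thd y = snd (snd y)"

definition I :: "nat \<Rightarrow> nat \<Rightarrow> (nat \<times> nat) pmf" where "I m n = map_pmf ival (G m n)"
definition C :: "nat \<Rightarrow> nat \<Rightarrow> nat pmf" where "C m n = map_pmf thd (G m n)"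

lemma G_Suc: "G m (Suc n) = bind_pmf (I m n) (trn m)"
  unfolding G_def I_def by (simp add: fwd_Suc' bind_assoc_pmf bind_map_pmf map_bind_pmf ival_def del: fwd.simps)

lemma I_Suc: "I m (Suc n) = bind_pmf (I m n) (\<lambda>x. map_pmf ival (trn m x))"
  unfolding I_def[of m "Suc n"] G_Suc by (simp add: map_bind_pmf)

lemma C_Suc: "C m (Suc n) = bind_pmf (I m n) (\<lambda>x. map_pmf thd (trn m x))"
  unfolding C_def G_Suc by (simp add: map_bind_pmf)

lemma I_0: "m \<ge> 1 \<Longrightarrow> I m 0 = map_pmf (\<lambda>p. (p,p)) (pmf_of_set {1..m})"
  unfolding I_def G_def by (simp add: map_bind_pmf bind_return_pmf' map_pmf_def[symmetric] map_pmf_comp ival_def o_def)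

lemma C_0: "m \<ge> 1 \<Longrightarrow> C m 0 = pmf_of_set {1..m}"
  unfolding C_def G_def by (simp add: map_bind_pmf bind_return_pmf' thd_def)

lemma trn_ival: "a \<le> b \<Longrightarrow> map_pmf ival (trn m (a,b)) =
  (if a \<le> 1 then return_pmf (a,b+1) else if m \<le> b then return_pmf (a-1,b)
   else pmf_of_set {(a-1,b),(a,b+1)})"
proof -
  assume ab: "a \<le> b"
  have "map_pmf (\<lambda>c. ival (if c = a-1 then (a-1,b,a-1) else (a,b+1,b+1))) (pmf_of_set {a-1,b+1})
     = map_pmf (\<lambda>c. if c = a-1 then (a-1,b) else (a,b+1)) (pmf_of_set {a-1,b+1})"
    by (intro map_pmf_cong) (auto simp: ival_def)
  also have "\<dots> = pmf_of_set ((\<lambda>c. if c = a-1 then (a-1,b) else (a,b+1)) ` {a-1,b+1})"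
    using ab by (intro map_pmf_of_set_inj) (auto simp: inj_on_def)
  also have "(\<lambda>c. if c = a-1 then (a-1,b) else (a,b+1)) ` {a-1,b+1} = {(a-1,b),(a,b+1)}"
    using ab by auto
  finally show ?thesis by (simp add: trn_def ival_def map_pmf_comp o_def)
qed

lemma trn_thd: "a \<le> b \<Longrightarrow> map_pmf thd (trn m (a,b)) =
  (if a \<le> 1 then return_pmf (b+1) else if m \<le> b then return_pmf (a-1)
   else pmf_of_set {a-1,b+1})"
proof -
  assume ab: "a \<le> b"
  have "map_pmf (\<lambda>c. thd (if c = a-1 then (a-1,b,a-1) else (a,b+1,b+1))) (pmf_of_set {a-1,b+1})
     = map_pmf id (pmf_of_set {a-1,b+1})"
    using ab by (intro map_pmf_cong) (auto simp: thd_def)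
  then show ?thesis by (simp add: trn_def thd_def map_pmf_comp o_def)
qed

definition Pint :: "nat \<Rightarrow> nat \<Rightarrow> nat \<Rightarrow> real" where
  "Pint m s e = (if s = 1 \<and> e = m then 1 else if s = 1 \<or> e = m then real (e - s + 2) / (2 * real m) else 1 / real m)"

definition Ic :: "nat \<Rightarrow> nat \<Rightarrow> nat \<Rightarrow> nat \<Rightarrow> real" where
  "Ic m n s e = (if 1 \<le> s \<and> e = s + n \<and> e \<le> m then Pint m s e else 0)"

definition mI :: "nat \<Rightarrow> nat \<Rightarrow> nat \<Rightarrow> nat \<Rightarrow> nat \<Rightarrow> real" where
  "mI m a b s e = (if a \<le> 1 then (if (s,e) = (a,b+1) then 1 else 0)
     else if m \<le> b then (if (s,e) = (a-1,b) then 1 else 0)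
     else if (s,e) = (a-1,b) \<or> (s,e) = (a,b+1) then 1/2 else 0)"

lemma arithI:
  assumes "Suc n < m"
  shows "(if 1 \<le> s+1 \<and> e = s+1+n \<and> e \<le> m then mI m (s+1) e s e * Pint m (s+1) e else 0)
       + (if 1 \<le> s \<and> e-1 = s+n \<and> e-1 \<le> m then mI m s (e-1) s e * Pint m s (e-1) else 0)
       = Ic m (Suc n) s e"
proof -
  have m0: "real m > 0" using assms by simp
  show ?thesis
  proof (cases "1 \<le> s \<and> e = s + Suc n \<and> e \<le> m")
    case False
    then show ?thesis using assms unfolding Ic_def mI_def by auto
  next
    case True
    then have s1: "1 \<le> s" and e: "e = s + Suc n" and em: "e \<le> m" by auto
    show ?thesis
    proof (cases "s = 1")
      case s: True
      show ?thesis
      proof (cases "e = m")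
        case True
        then show ?thesis using s e em assms m0 unfolding Ic_def mI_def Pint_def
          by (simp add: field_simps)
      next
        case False
        then show ?thesis using s e em assms m0 unfolding Ic_def mI_def Pint_def
          by (simp add: field_simps)
      qed
    next
      case s: False
      show ?thesis
      proof (cases "e = m")
        case True
        then show ?thesis using s s1 e em assms m0 unfolding Ic_def mI_def Pint_def
          by (simp add: field_simps)
      next
        case False
        then show ?thesis using s s1 e em assms m0 unfolding Ic_def mI_def Pint_def
          by (simp add: field_simps)
      qed
    qed
  qed
qed

lemma pmf_bind_fin:
  assumes "finite A" "\<And>x. x \<in> set_pmf M \<Longrightarrow> pmf (f x) y \<noteq> 0 \<Longrightarrow> x \<in> A"
  shows "pmf (bind_pmf M f) y = (\<Sum>x\<in>A. pmf (f x) y * pmf M x)"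
  unfolding pmf_bind by (rule integral_measure_pmf_real[OF assms])

lemma pmf_mI: "a \<le> b \<Longrightarrow> pmf (map_pmf ival (trn m (a,b))) (s,e) = mI m a b s e"
proof -
  assume ab: "a \<le> b"
  have c: "card {(a - 1, b), (a, b + 1)} = 2" using ab by auto
  show ?thesis using ab c unfolding trn_ival[OF ab] mI_def
    by (auto simp: indicator_def)
qed

lemma I_closed: "Suc n \<le> m \<Longrightarrow> pmf (I m n) (s,e) = Ic m n s e"
proof (induction n arbitrary: s e)
  case 0
  then have m1: "m \<ge> 1" by simp
  have "I m 0 = pmf_of_set ((\<lambda>p. (p,p)) ` {1..m})"
    unfolding I_0[OF m1] using m1 by (intro map_pmf_of_set_inj) (auto simp: inj_on_def)
  moreover have "card ((\<lambda>p. (p,p)) ` {1..m}) = m"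
    by (subst card_image) (auto simp: inj_on_def)
  ultimately show ?case using m1 unfolding Ic_def Pint_def
    by (auto simp: indicator_def)
next
  case (Suc n)
  have IH: "\<And>s e. pmf (I m n) (s,e) = Ic m n s e" using Suc by simp
  have sup: "b = a + n" if "(a,b) \<in> set_pmf (I m n)" for a b
  proof -
    have "pmf (I m n) (a,b) \<noteq> 0" using that by (simp add: set_pmf_iff)
    then show ?thesis unfolding IH Ic_def by (auto split: if_splits)
  qed
  have "pmf (I m (Suc n)) (s,e) = (\<Sum>x\<in>{(s+1,e),(s,e-1)}. pmf (map_pmf ival (trn m x)) (s,e) * pmf (I m n) x)"
    unfolding I_Suc
  proof (rule pmf_bind_fin)
    fix x assume x: "x \<in> set_pmf (I m n)" "pmf (map_pmf ival (trn m x)) (s, e) \<noteq> 0"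
    obtain a b where xab: "x = (a,b)" by fastforce
    have "b = a + n" using sup x xab by simp
    then show "x \<in> {(s+1,e),(s,e-1)}" using x xab pmf_mI[of a b m s e] unfolding mI_def
      by (auto split: if_splits)
  qed simp
  also have "\<dots> = pmf (map_pmf ival (trn m (s+1,e))) (s,e) * Ic m n (s+1) e
      + pmf (map_pmf ival (trn m (s,e-1))) (s,e) * Ic m n s (e-1)"
    by (simp add: IH)
  also have "\<dots> = (if 1 \<le> s+1 \<and> e = s+1+n \<and> e \<le> m then mI m (s+1) e s e * Pint m (s+1) e else 0)
       + (if 1 \<le> s \<and> e-1 = s+n \<and> e-1 \<le> m then mI m s (e-1) s e * Pint m s (e-1) else 0)"
    unfolding Ic_def by (simp add: pmf_mI)
  also have "\<dots> = Ic m (Suc n) s e" using arithI Suc.prems by simp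
  finally show ?case .
qed


lemma conitzer_supp:
  assumes "v \<in> set_pmf (conitzer m)" and m1: "m \<ge> 1"
  shows "distinct v \<and> set v = {1..m} \<and> length v = m"
proof -
  have "v \<in> set_pmf (bind_pmf (pmf_of_set {1..m}) (\<lambda>c. map_pmf ((#) c) (con_ext m c c (m-1))))"
    using assms(1) unfolding conitzer_def .
  then have "\<exists>p\<in>{1..m}. v \<in> set_pmf (map_pmf ((#) p) (con_ext m p p (m-1)))"
    using m1 by (simp only: set_bind_pmf set_pmf_of_set finite_atLeastAtMost) auto
  then obtain p where p: "p \<in> {1..m}" and "v \<in> (#) p ` set_pmf (con_ext m p p (m-1))"
    by (auto simp only: set_map_pmf)
  then obtain xs where v: "v = p # xs" and xs: "xs \<in> set_pmf (con_ext m p p (m-1))" by blast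
  have pp: "1 \<le> p" "p \<le> p" "p \<le> m" "p + 1 + (m-1) = m + p" using p m1 by auto
  have h: "distinct xs \<and> set xs = {1..m} - {p..p}"
    by (rule con_ext_set[OF pp xs])
  have d: "distinct v" using v h by simp
  have s: "set v = {1..m}"
  proof -
    have "set v = insert p ({1..m} - {p})" using v h by simp
    then show ?thesis using p insert_Diff[of p "{1..m}"] by simp
  qed
  have "length v = m" using distinct_card[OF d] s by simp
  then show ?thesis using d s by simp
qed

lemma pos_iff:
  assumes d: "distinct v" and j: "j \<in> set v" and i: "1 \<le> i" "i \<le> length v"
  shows "pos v j = i \<longleftrightarrow> last (take i v) = j"
proof -
  have lt: "last (take i v) = v ! (i-1)" using i
    by (subst last_conv_nth) (auto simp: min_def)
  obtain k where k: "k < length v" "v ! k = j" using j by (auto simp: in_set_conv_nth)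
  have L: "(LEAST x. x < length v \<and> v ! x = j) = k"
  proof (rule Least_equality)
    show "k < length v \<and> v ! k = j" using k by simp
    fix y assume "y < length v \<and> v ! y = j"
    then have "y = k" using d k nth_eq_iff_index_eq by metis
    then show "k \<le> y" by simp
  qed
  have "pos v j = Suc k" unfolding pos_def L ..
  moreover have "v ! (i-1) = j \<longleftrightarrow> i - 1 = k" using d k i nth_eq_iff_index_eq[of v "i-1" k] by linarith
  ultimately show ?thesis using lt i by linarith
qed

lemma prob_pos:
  assumes j: "j \<in> {1..m}" and i: "i \<in> {1..m}"
  shows "measure_pmf.prob (conitzer m) {v. pos v j = i} = pmf (C m (i-1)) j"
proof -
  have "{v. pos v j = i} \<inter> set_pmf (conitzer m) = {v. last (take i v) = j} \<inter> set_pmf (conitzer m)"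
  proof -
    have "(pos v j = i) = (last (take i v) = j)" if v: "v \<in> set_pmf (conitzer m)" for v
    proof -
      have "distinct v \<and> set v = {1..m} \<and> length v = m" using conitzer_supp[OF v] j by simp
      then show ?thesis using pos_iff[of v j i] j i by simp
    qed
    then show ?thesis by blast
  qed
  then have "measure_pmf.prob (conitzer m) {v. pos v j = i} = measure_pmf.prob (conitzer m) {v. last (take i v) = j}"
    by (metis measure_Int_set_pmf)
  also have "\<dots> = measure_pmf.prob (map_pmf last (map_pmf (take i) (conitzer m))) {j}"
    by (simp add: vimage_def)
  also have "map_pmf (take i) (conitzer m) = bind_pmf (pmf_of_set {1..m}) (\<lambda>p. map_pmf ((#) p) (con_ext m p p (i-1)))"
  proof -
    have "map_pmf (take i) (conitzer m) = bind_pmf (pmf_of_set {1..m}) (\<lambda>p. map_pmf ((#) p) (map_pmf (take (i-1)) (con_ext m p p (m-1))))"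
      unfolding conitzer_def map_bind_pmf map_pmf_comp
      using i by (intro bind_pmf_cong refl map_pmf_cong) (auto simp: take_Cons')
    also have "\<dots> = bind_pmf (pmf_of_set {1..m}) (\<lambda>p. map_pmf ((#) p) (con_ext m p p (i-1)))"
    proof -
      have "\<And>p. map_pmf (take (i-1)) (con_ext m p p (m-1)) = con_ext m p p (i-1)"
        using i by (intro con_ext_take) auto
      then show ?thesis by simp
    qed
    finally show ?thesis .
  qed
  also have "map_pmf last (bind_pmf (pmf_of_set {1..m}) (\<lambda>p. map_pmf ((#) p) (con_ext m p p (i-1)))) = C m (i-1)"
  proof -
    have "map_pmf last (bind_pmf (pmf_of_set {1..m}) (\<lambda>p. map_pmf ((#) p) (con_ext m p p (i-1))))
      = bind_pmf (pmf_of_set {1..m}) (\<lambda>p. map_pmf thd (map_pmf (summ p p p) (con_ext m p p (i-1))))"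
      unfolding map_bind_pmf map_pmf_comp
      by (intro bind_pmf_cong refl map_pmf_cong) (simp add: thd_def summ_def)
    also have "\<dots> = bind_pmf (pmf_of_set {1..m}) (\<lambda>p. map_pmf thd (fwd m (p,p,p) (i-1)))"
      using i j by (intro bind_pmf_cong refl) (subst con_fwd, auto)
    also have "\<dots> = C m (i-1)" unfolding C_def G_def map_bind_pmf ..
    finally show ?thesis .
  qed
  finally show ?thesis by (simp add: measure_pmf_single)
qed

definition mC :: "nat \<Rightarrow> nat \<Rightarrow> nat \<Rightarrow> nat \<Rightarrow> real" where
  "mC m a b j = (if a \<le> 1 then (if j = b+1 then 1 else 0)
     else if m \<le> b then (if j = a-1 then 1 else 0)
     else if j = a-1 \<or> j = b+1 then 1/2 else 0)"

definition T1 :: "nat \<Rightarrow> nat \<Rightarrow> nat \<Rightarrow> real" where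
  "T1 m n j = (if 1 \<le> j+1 \<and> j+1+n \<le> m then mC m (j+1) (j+1+n) j * Pint m (j+1) (j+1+n) else 0)"
definition T2 :: "nat \<Rightarrow> nat \<Rightarrow> nat \<Rightarrow> real" where
  "T2 m n j = (if 1 \<le> j-n-1 \<and> j-1 = j-n-1+n \<and> j-1 \<le> m then mC m (j-n-1) (j-1) j * Pint m (j-n-1) (j-1) else 0)"

definition Cf :: "nat \<Rightarrow> nat \<Rightarrow> nat \<Rightarrow> real" where
  "Cf m n j = T1 m n j + T2 m n j"

lemma Pint_int: "1 < s \<Longrightarrow> e < m \<Longrightarrow> Pint m s e = 1 / real m"
  unfolding Pint_def by auto
lemma Pint_left: "s = 1 \<Longrightarrow> s \<le> e \<Longrightarrow> e < m \<Longrightarrow> Pint m s e = real (e + 1) / (2 * real m)"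
  unfolding Pint_def by auto
lemma Pint_right: "1 < s \<Longrightarrow> s \<le> m \<Longrightarrow> e = m \<Longrightarrow> Pint m s e = real (m + 2 - s) / (2 * real m)"
  unfolding Pint_def by auto
lemma mC_half: "1 < a \<Longrightarrow> b < m \<Longrightarrow> j = a - 1 \<or> j = b + 1 \<Longrightarrow> mC m a b j = 1/2"
  unfolding mC_def by auto
lemma mC_lf: "1 < a \<Longrightarrow> m \<le> b \<Longrightarrow> j = a - 1 \<Longrightarrow> mC m a b j = 1"
  unfolding mC_def by auto
lemma mC_rf: "a \<le> 1 \<Longrightarrow> j = b + 1 \<Longrightarrow> mC m a b j = 1"
  unfolding mC_def by auto

lemma part1:
  assumes m: "even m" and j: "1 \<le> j" "j \<le> m div 2" and i: "2 \<le> i" "i \<le> m"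
  shows "Cf m (i-2) j = (if i < j then 2 / (2 * real m)
               else if i = j then real (j+1) / (2 * real m)
               else if i < m - j + 1 then 1 / (2 * real m)
               else if i = m - j + 1 then real (m - j + 1) / (2 * real m)
               else 0)"
proof -
  have m0: "real m > 0" using i by simp
  have jm: "2 * j \<le> m" using m j by auto
  define n where "n = i - 2"
  have ni: "i = n + 2" using i n_def by simp
  consider "i < j" | "i = j" | "j < i \<and> i < m - j + 1" | "i = m - j + 1" | "i > m - j + 1" by linarith
  then show ?thesis
  proof cases
    case 1
    have a: "T1 m n j = 1 / (2 * real m)"
      using 1 jm ni j unfolding T1_def by (simp add: Pint_int mC_half)
    have b: "T2 m n j = 1 / (2 * real m)"
    proof -
      have c: "1 \<le> j-n-1 \<and> j-1 = j-n-1+n \<and> j-1 \<le> m" using 1 ni jm j by auto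
      have p: "Pint m (j-n-1) (j-1) = 1 / real m" using 1 ni jm j by (intro Pint_int) auto
      have q: "mC m (j-n-1) (j-1) j = 1/2" using 1 ni jm j by (intro mC_half) auto
      have "T2 m n j = mC m (j-n-1) (j-1) j * Pint m (j-n-1) (j-1)" unfolding T2_def by (rule if_P[OF c])
      then show ?thesis unfolding p q by simp
    qed
    show ?thesis using a b 1 unfolding Cf_def n_def[symmetric] by simp
  next
    case 2
    have a: "T1 m n j = 1 / (2 * real m)"
      using 2 jm ni j unfolding T1_def by (simp add: Pint_int mC_half)
    have b: "T2 m n j = real j / (2 * real m)"
    proof -
      have c: "1 \<le> j-n-1 \<and> j-1 = j-n-1+n \<and> j-1 \<le> m" using 2 ni jm j by auto
      have p: "Pint m (j-n-1) (j-1) = real (j - 1 + 1) / (2 * real m)" using 2 ni jm j by (intro Pint_left) auto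
      have q: "mC m (j-n-1) (j-1) j = 1" using 2 ni jm j by (intro mC_rf) auto
      have "T2 m n j = mC m (j-n-1) (j-1) j * Pint m (j-n-1) (j-1)" unfolding T2_def by (rule if_P[OF c])
      then show ?thesis unfolding p q using 2 ni by simp
    qed
    show ?thesis using a b 2 m0 unfolding Cf_def n_def[symmetric] by (simp add: field_simps)
  next
    case 3
    have a: "T1 m n j = 1 / (2 * real m)"
    proof -
      have c: "1 \<le> j+1 \<and> j+1+n \<le> m" using 3 ni jm j by auto
      have p: "Pint m (j+1) (j+1+n) = 1 / real m" using 3 ni jm j by (intro Pint_int) auto
      have q: "mC m (j+1) (j+1+n) j = 1/2" using 3 ni jm j by (intro mC_half) auto
      have "T1 m n j = mC m (j+1) (j+1+n) j * Pint m (j+1) (j+1+n)" unfolding T1_def by (rule if_P[OF c])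
      then show ?thesis unfolding p q by simp
    qed
    have b: "T2 m n j = 0" using 3 ni unfolding T2_def by auto
    show ?thesis using a b 3 unfolding Cf_def n_def[symmetric] by simp
  next
    case 4
    have a: "T1 m n j = real (m - j + 1) / (2 * real m)"
    proof -
      have c: "1 \<le> j+1 \<and> j+1+n \<le> m" using 4 ni jm j by auto
      have p: "Pint m (j+1) (j+1+n) = real (m + 2 - (j+1)) / (2 * real m)" using 4 ni jm j by (intro Pint_right) auto
      have q: "mC m (j+1) (j+1+n) j = 1" using 4 ni jm j by (intro mC_lf) auto
      have r: "m + 2 - (j+1) = m - j + 1" using jm by simp
      have "T1 m n j = mC m (j+1) (j+1+n) j * Pint m (j+1) (j+1+n)" unfolding T1_def by (rule if_P[OF c])
      then show ?thesis unfolding p q r by simp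
    qed
    have b: "T2 m n j = 0" using 4 ni jm j unfolding T2_def by auto
    have ne: "\<not> i < j" "i \<noteq> j" "\<not> i < m - j + 1" using 4 jm by auto
    show ?thesis using a b 4 ne unfolding Cf_def n_def[symmetric] by simp
  next
    case 5
    have a: "T1 m n j = 0" using 5 ni jm j unfolding T1_def by auto
    have b: "T2 m n j = 0" using 5 ni jm j unfolding T2_def by auto
    have ne: "\<not> i < j" "i \<noteq> j" "\<not> i < m - j + 1" "i \<noteq> m - j + 1" using 5 jm by auto
    show ?thesis using a b ne unfolding Cf_def n_def[symmetric] by simp
  qed
qed


lemma sym1:
  assumes j: "1 \<le> j" "j \<le> m"
  shows "T1 m n j = T2 m n (m - j + 1)"
proof (cases "j+1+n \<le> m")
  case True
  have e1: "m - j + 1 - n - 1 = m - j - n" "m - j + 1 - 1 = m - j" by auto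
  have c1: "1 \<le> j+1 \<and> j+1+n \<le> m" using True by simp
  have c2: "1 \<le> (m-j+1)-n-1 \<and> (m-j+1)-1 = (m-j+1)-n-1+n \<and> (m-j+1)-1 \<le> m" using True by auto
  have "T1 m n j = mC m (j+1) (j+1+n) j * Pint m (j+1) (j+1+n)" unfolding T1_def by (rule if_P[OF c1])
  moreover have "T2 m n (m-j+1) = mC m (m-j-n) (m-j) (m-j+1) * Pint m (m-j-n) (m-j)"
  proof -
    have c3: "1 \<le> m - j - n \<and> m - j = m - j - n + n \<and> m - j \<le> m" using c2 unfolding e1 .
    show ?thesis unfolding T2_def e1 by (rule if_P[OF c3])
  qed
  moreover have "mC m (j+1) (j+1+n) j = mC m (m-j-n) (m-j) (m-j+1)"
    using True j unfolding mC_def by auto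
  moreover have "Pint m (j+1) (j+1+n) = Pint m (m-j-n) (m-j)"
  proof -
    have "m - j - (m - j - n) + 2 = j + 1 + n - (j + 1) + 2" using True by simp
    then show ?thesis using True j unfolding Pint_def by auto
  qed
  ultimately show ?thesis by simp
next
  case False
  then show ?thesis unfolding T1_def T2_def by auto
qed

lemma part2:
  assumes j: "1 \<le> j" "j \<le> m"
  shows "Cf m n j = Cf m n (m - j + 1)"
proof -
  have a: "T1 m n j = T2 m n (m - j + 1)" using sym1 j by simp
  have "T1 m n (m - j + 1) = T2 m n (m - (m - j + 1) + 1)" using sym1[of "m-j+1" m n] j by simp
  moreover have "m - (m - j + 1) + 1 = j" using j by simp
  ultimately have b: "T2 m n j = T1 m n (m - j + 1)" by simp
  show ?thesis unfolding Cf_def a b by simp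
qed


lemma pmf_mC: "a \<le> b \<Longrightarrow> pmf (map_pmf thd (trn m (a,b))) j = mC m a b j"
proof -
  assume ab: "a \<le> b"
  have c: "card {a - 1, b + 1} = 2" using ab by auto
  show ?thesis using ab c unfolding trn_thd[OF ab] mC_def
    by (auto simp: indicator_def)
qed

lemma mult_if0: "(a::real) * (if P then b else 0) = (if P then a * b else 0)"
  by simp

lemma C_closed: "Suc n \<le> m \<Longrightarrow> pmf (C m (Suc n)) j = Cf m n j"
proof -
  assume nm: "Suc n \<le> m"
  have IH: "\<And>s e. pmf (I m n) (s,e) = Ic m n s e" using I_closed[OF nm] by simp
  have sup: "b = a + n" if "(a,b) \<in> set_pmf (I m n)" for a b
  proof -
    have "pmf (I m n) (a,b) \<noteq> 0" using that by (simp add: set_pmf_iff)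
    then show ?thesis unfolding IH Ic_def by (auto split: if_splits)
  qed
  have "pmf (C m (Suc n)) j = (\<Sum>x\<in>{(j+1,j+1+n),(j-n-1,j-1)}. pmf (map_pmf thd (trn m x)) j * pmf (I m n) x)"
    unfolding C_Suc
  proof (rule pmf_bind_fin)
    fix x assume x: "x \<in> set_pmf (I m n)" "pmf (map_pmf thd (trn m x)) j \<noteq> 0"
    obtain a b where xab: "x = (a,b)" by fastforce
    have ba: "b = a + n" using sup x xab by simp
    have "mC m a b j \<noteq> 0" using x xab pmf_mC[of a b m j] ba by simp
    then have "j = b + 1 \<or> (2 \<le> a \<and> j = a - 1)" unfolding mC_def by (auto split: if_splits)
    then show "x \<in> {(j+1,j+1+n),(j-n-1,j-1)}"
    proof
      assume "j = b + 1"
      then have "a = j - n - 1" "b = j - 1" using ba by simp_all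
      then show ?thesis using xab by simp
    next
      assume "2 \<le> a \<and> j = a - 1"
      then have "a = j + 1" "b = j + 1 + n" using ba by simp_all
      then show ?thesis using xab by simp
    qed
  qed simp
  also have "\<dots> = pmf (map_pmf thd (trn m (j+1,j+1+n))) j * Ic m n (j+1) (j+1+n)
      + pmf (map_pmf thd (trn m (j-n-1,j-1))) j * Ic m n (j-n-1) (j-1)"
    by (simp add: IH)
  also have "\<dots> = Cf m n j"
  proof -
    have 1: "pmf (map_pmf thd (trn m (j+1,j+1+n))) j * Ic m n (j+1) (j+1+n) = T1 m n j"
      unfolding Ic_def T1_def pmf_mC[of "j+1" "j+1+n", OF le_add1] mult_if0
        by (simp only: simp_thms)
    have le: "j-n-1 \<le> j-1" by simp
    have 2: "pmf (map_pmf thd (trn m (j-n-1,j-1))) j * Ic m n (j-n-1) (j-1) = T2 m n j"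
      unfolding Ic_def T2_def pmf_mC[OF le] mult_if0 by (rule refl)
    show ?thesis unfolding Cf_def 1[symmetric] 2[symmetric] ..
  qed
  finally show ?thesis .
qed

theorem theorem4:
  fixes m :: nat
  assumes "even m"
  shows "(\<forall>j\<in>{1..m div 2}. \<forall>i\<in>{1..m}.
            measure_pmf.prob (conitzer m) {v. pos v j = i} =
              (if i < j then 2 / (2 * real m)
               else if i = j then real (j+1) / (2 * real m)
               else if i < m - j + 1 then 1 / (2 * real m)
               else if i = m - j + 1 then real (m - j + 1) / (2 * real m)
               else 0))
       \<and> (\<forall>j\<in>{1..m}. \<forall>i\<in>{1..m}.
            measure_pmf.prob (conitzer m) {v. pos v j = i} =
            measure_pmf.prob (conitzer m) {v. pos v (m - j + 1) = i})"
proof (intro conjI ballI)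
  fix j i assume j: "j \<in> {1..m div 2}" and i: "i \<in> {1..m}"
  have jm: "j \<in> {1..m}" using j by auto
  have m1: "m \<ge> 1" using i by simp
  have P: "measure_pmf.prob (conitzer m) {v. pos v j = i} = pmf (C m (i-1)) j" by (rule prob_pos[OF jm i])
  show "measure_pmf.prob (conitzer m) {v. pos v j = i} =
              (if i < j then 2 / (2 * real m)
               else if i = j then real (j+1) / (2 * real m)
               else if i < m - j + 1 then 1 / (2 * real m)
               else if i = m - j + 1 then real (m - j + 1) / (2 * real m)
               else 0)"
  proof (cases "i = 1")
    case True
    have "pmf (C m (i-1)) j = 1 / real m" using True C_0[OF m1] jm by simp
    moreover have "m - j + 1 > 1" using j by auto
    ultimately show ?thesis unfolding P using True j m1 by auto
  next
    case False
    then have i2: "i - 1 = Suc (i - 2)" "2 \<le> i" "i \<le> m" using i by auto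
    have "pmf (C m (i-1)) j = Cf m (i-2) j" unfolding i2(1) by (rule C_closed) (use i2 in simp)
    also have "\<dots> = (if i < j then 2 / (2 * real m)
               else if i = j then real (j+1) / (2 * real m)
               else if i < m - j + 1 then 1 / (2 * real m)
               else if i = m - j + 1 then real (m - j + 1) / (2 * real m)
               else 0)" by (rule part1) (use assms j i2 in auto)
    finally show ?thesis unfolding P .
  qed
next
  fix j i assume j: "j \<in> {1..m}" and i: "i \<in> {1..m}"
  have j': "m - j + 1 \<in> {1..m}" using j by auto
  have m1: "m \<ge> 1" using i by simp
  show "measure_pmf.prob (conitzer m) {v. pos v j = i} =
            measure_pmf.prob (conitzer m) {v. pos v (m - j + 1) = i}"
    unfolding prob_pos[OF j i] prob_pos[OF j' i]
  proof (cases "i = 1")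
    case True
    then show "pmf (C m (i-1)) j = pmf (C m (i-1)) (m - j + 1)" using C_0[OF m1] j j' by simp
  next
    case False
    then have i2: "i - 1 = Suc (i - 2)" "2 \<le> i" "i \<le> m" using i by auto
    have "pmf (C m (i-1)) j = Cf m (i-2) j" unfolding i2(1) by (rule C_closed) (use i2 in simp)
    also have "\<dots> = Cf m (i-2) (m - j + 1)" by (rule part2) (use j in auto)
    also have "\<dots> = pmf (C m (i-1)) (m - j + 1)" unfolding i2(1) by (rule C_closed[symmetric]) (use i2 in simp)
    finally show "pmf (C m (i-1)) j = pmf (C m (i-1)) (m - j + 1)" .
  qed
qed

end
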